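(* Let $G=(V,E)$ be a network as in the context, let $\xi\subseteq E$ be an edge subset, $t$ a sink node, and $r$ an integer with $\mathrm{mincut}(\xi,t)\le r\le C_t$. Then there exists an edge subset $\eta\subseteq E$ with $|\eta|=r$ that is primary for $t$ and such that $\eta$ is a cut separating $t$ from $\xi$.
   Context: Network: $G=(V,E)$ is a finite directed acyclic graph (parallel edges allowed) with a single source node $s$ and a set of sink nodes $T\subseteq V\setminus\{s\}$; $s$ has no incoming edges and sinks have no outgoing edges. A directed path is a sequence of edges $(e_1,\dots,e_m)$, $m\ge1$, with tail of $e_{k+1}$ equal to head of $e_k$. A cut separating node $v$ from node $u$ is a set of edges whose removal leaves no directed path from $u$ to $v$; $C_t$ is the minimum size of a cut separating sink $t$ from $s$. For $\xi\subseteq E$ and a node $u$, $A\subseteq E$ is a cut separating $u$ from $\xi$ if every directed path in $G$ whose first edge lies in $\xi$ and whose last edge has head $u$ contains an edge of $A$ (equivalently, $A$ separates $\xi$ from $u$ in the reversed network). $\mathrm{mincut}(\xi,u)$ is the minimum size of such a cut; a cut of that size is a minimum cut separating $u$ from $\xi$. A minimum cut separating $u$ from $\xi$ is primary if it separates $u$ from every minimum cut separating $u$ from $\xi$; it exists and is unique. An edge subset $\eta$ is primary for $u$ if $\eta$ is the primary minimum cut separating $u$ from $\eta$. *)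

theory Defs
  imports Main
begin

text \<open>A network: node set V, edge set E (edge identifiers, so parallel edges are allowed),
  tail and head maps tail, head, source s, set of sinks T.\<close>

definition is_path :: "'e set \<Rightarrow> ('e \<Rightarrow> 'v) \<Rightarrow> ('e \<Rightarrow> 'v) \<Rightarrow> 'e list \<Rightarrow> bool" where
  "is_path E tail head p \<longleftrightarrow> p \<noteq> [] \<and> set p \<subseteq> E \<and>
     (\<forall>k. Suc k < length p \<longrightarrow> tail (p ! Suc k) = head (p ! k))"

definition network ::
  "'v set \<Rightarrow> 'e set \<Rightarrow> ('e \<Rightarrow> 'v) \<Rightarrow> ('e \<Rightarrow> 'v) \<Rightarrow> 'v \<Rightarrow> 'v set \<Rightarrow> bool" where
  "network V E tail head s T \<longleftrightarrow>
     finite V \<and> finite E \<and> (\<forall>e\<in>E. tail e \<in> V \<and> head e \<in> V) \<and>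
     \<comment> \<open>acyclic: no directed cycle\<close>
     (\<forall>p. is_path E tail head p \<longrightarrow> tail (p ! 0) \<noteq> head (last p)) \<and>
     s \<in> V \<and> T \<subseteq> V - {s} \<and>
     (\<forall>e\<in>E. head e \<noteq> s) \<and> (\<forall>e\<in>E. tail e \<notin> T)"

definition node_cut :: "'e set \<Rightarrow> ('e \<Rightarrow> 'v) \<Rightarrow> ('e \<Rightarrow> 'v) \<Rightarrow> 'v \<Rightarrow> 'v \<Rightarrow> 'e set \<Rightarrow> bool" where
  "node_cut E tail head u v A \<longleftrightarrow> A \<subseteq> E \<and>
     (\<forall>p. is_path E tail head p \<and> tail (p ! 0) = u \<and> head (last p) = v \<longrightarrow> set p \<inter> A \<noteq> {})"

definition C_min :: "'e set \<Rightarrow> ('e \<Rightarrow> 'v) \<Rightarrow> ('e \<Rightarrow> 'v) \<Rightarrow> 'v \<Rightarrow> 'v \<Rightarrow> nat" where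
  "C_min E tail head s t = (LEAST k. \<exists>A. node_cut E tail head s t A \<and> card A = k)"

definition edge_cut :: "'e set \<Rightarrow> ('e \<Rightarrow> 'v) \<Rightarrow> ('e \<Rightarrow> 'v) \<Rightarrow> 'e set \<Rightarrow> 'v \<Rightarrow> 'e set \<Rightarrow> bool" where
  "edge_cut E tail head xi u A \<longleftrightarrow> A \<subseteq> E \<and>
     (\<forall>p. is_path E tail head p \<and> p ! 0 \<in> xi \<and> head (last p) = u \<longrightarrow> set p \<inter> A \<noteq> {})"

definition mincut :: "'e set \<Rightarrow> ('e \<Rightarrow> 'v) \<Rightarrow> ('e \<Rightarrow> 'v) \<Rightarrow> 'e set \<Rightarrow> 'v \<Rightarrow> nat" where
  "mincut E tail head xi u = (LEAST k. \<exists>A. edge_cut E tail head xi u A \<and> card A = k)"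

definition min_edge_cut :: "'e set \<Rightarrow> ('e \<Rightarrow> 'v) \<Rightarrow> ('e \<Rightarrow> 'v) \<Rightarrow> 'e set \<Rightarrow> 'v \<Rightarrow> 'e set \<Rightarrow> bool" where
  "min_edge_cut E tail head xi u A \<longleftrightarrow>
     edge_cut E tail head xi u A \<and> card A = mincut E tail head xi u"

definition primary_cut :: "'e set \<Rightarrow> ('e \<Rightarrow> 'v) \<Rightarrow> ('e \<Rightarrow> 'v) \<Rightarrow> 'e set \<Rightarrow> 'v \<Rightarrow> 'e set \<Rightarrow> bool" where
  "primary_cut E tail head xi u A \<longleftrightarrow> min_edge_cut E tail head xi u A \<and>
     (\<forall>B. min_edge_cut E tail head xi u B \<longrightarrow> edge_cut E tail head B u A)"

definition primary_for :: "'e set \<Rightarrow> ('e \<Rightarrow> 'v) \<Rightarrow> ('e \<Rightarrow> 'v) \<Rightarrow> 'e set \<Rightarrow> 'v \<Rightarrow> bool" where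
  "primary_for E tail head eta u \<longleftrightarrow> primary_cut E tail head eta u eta"

end

theory Submission
  imports Defs
begin

definition reach_av :: "'e set \<Rightarrow> ('e \<Rightarrow> 'v) \<Rightarrow> ('e \<Rightarrow> 'v) \<Rightarrow> 'v \<Rightarrow> 'e set \<Rightarrow> 'e set" where
  "reach_av E tail head u C = {e. \<exists>p. is_path E tail head p \<and> p ! 0 = e \<and> head (last p) = u \<and> set p \<inter> C = {}}"

lemma E_cut: "edge_cut E tail head A u E"
  unfolding edge_cut_def is_path_def by (simp add: Int_absorb2)

lemma mincut_ex: "\<exists>B. edge_cut E tail head A u B \<and> card B = mincut E tail head A u"
  unfolding mincut_def
  by (rule LeastI_ex[where P="\<lambda>k. \<exists>B. edge_cut E tail head A u B \<and> card B = k"]) (use E_cut[of E tail head A u] in blast)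

lemma mincut_le: "edge_cut E tail head A u B \<Longrightarrow> mincut E tail head A u \<le> card B"
  unfolding mincut_def by (rule Least_le) blast

lemma path_drop:
  assumes "is_path E tail head p" "k < length p"
  shows "is_path E tail head (drop k p)"
proof -
  have ne: "drop k p \<noteq> []" using assms(2) by simp
  have sE: "set (drop k p) \<subseteq> E"
    using assms(1) set_drop_subset[of k p] unfolding is_path_def by blast
  have ch: "\<forall>j. Suc (k + j) < length p \<longrightarrow> tail (p ! Suc (k + j)) = head (p ! (k + j))"
    using assms(1) unfolding is_path_def by blast
  have "tail (drop k p ! Suc j) = head (drop k p ! j)" if "Suc j < length (drop k p)" for j
  proof -
    have "Suc (k + j) < length p" using that by simp
    then have "tail (p ! Suc (k + j)) = head (p ! (k + j))" using ch by blast
    moreover have "drop k p ! Suc j = p ! Suc (k + j)" "drop k p ! j = p ! (k + j)"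
      using assms(2) by simp_all
    ultimately show ?thesis by simp
  qed
  then show ?thesis using ne sE unfolding is_path_def by blast
qed

lemma drop_facts:
  assumes "k < length p"
  shows "drop k p ! 0 = p ! k" "last (drop k p) = last p" "set (drop k p) \<subseteq> set p"
proof -
  show "drop k p ! 0 = p ! k" using assms by simp
  show "last (drop k p) = last p" using assms by simp
  show "set (drop k p) \<subseteq> set p" by (rule set_drop_subset)
qed

lemma hit_idx: "set p \<inter> B \<noteq> {} \<Longrightarrow> \<exists>k<length p. p ! k \<in> B"
  by (metis disjoint_iff in_set_conv_nth)

lemma cut_trans:
  assumes "edge_cut E tail head A u B" "edge_cut E tail head B u C"
  shows "edge_cut E tail head A u C"
  unfolding edge_cut_def
proof (intro conjI allI impI)
  show "C \<subseteq> E" using assms(2) by (simp add: edge_cut_def)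
  fix p assume p: "is_path E tail head p \<and> p ! 0 \<in> A \<and> head (last p) = u"
  have allB: "\<forall>q. is_path E tail head q \<and> q ! 0 \<in> A \<and> head (last q) = u \<longrightarrow> set q \<inter> B \<noteq> {}"
    using assms(1) by (simp add: edge_cut_def)
  have allC: "\<forall>q. is_path E tail head q \<and> q ! 0 \<in> B \<and> head (last q) = u \<longrightarrow> set q \<inter> C \<noteq> {}"
    using assms(2) by (simp add: edge_cut_def)
  have "set p \<inter> B \<noteq> {}" using allB[rule_format, OF p] .
  then obtain k where k: "k < length p" "p ! k \<in> B" using hit_idx[of p B] by blast
  have "is_path E tail head (drop k p) \<and> drop k p ! 0 \<in> B \<and> head (last (drop k p)) = u"
    using path_drop[of E tail head p k] p k drop_facts(1,2)[OF k(1)] by simp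
  then have "set (drop k p) \<inter> C \<noteq> {}" using allC by blast
  then show "set p \<inter> C \<noteq> {}" using drop_facts(3)[OF k(1)] by blast
qed

lemma cut_mono: "A' \<subseteq> A \<Longrightarrow> edge_cut E tail head A u B \<Longrightarrow> edge_cut E tail head A' u B"
  unfolding edge_cut_def by blast

lemma mincut_insert:
  assumes "finite E" "e \<in> E"
  shows "mincut E tail head (insert e A) u \<le> mincut E tail head A u + 1"
proof -
  obtain B where B: "edge_cut E tail head A u B" "card B = mincut E tail head A u"
    using mincut_ex[of E tail head A u] by blast
  have BE: "B \<subseteq> E" using B by (simp add: edge_cut_def)
  have "edge_cut E tail head (insert e A) u (insert e B)"
    using B(1) assms(2) unfolding edge_cut_def
    by (auto simp: is_path_def)
  then have "mincut E tail head (insert e A) u \<le> card (insert e B)" by (rule mincut_le)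
  also have "\<dots> \<le> card B + 1" using finite_subset[OF BE assms(1)] by (simp add: card_insert_if)
  finally show ?thesis using B by simp
qed

lemma ivt:
  assumes "finite E" "finite F" "F \<subseteq> E"
  shows "mincut E tail head A u \<le> r \<Longrightarrow> r \<le> mincut E tail head (A \<union> F) u \<Longrightarrow>
    \<exists>C. A \<subseteq> C \<and> C \<subseteq> A \<union> F \<and> mincut E tail head C u = r"
  using assms(2,3)
proof (induction F rule: finite_induct)
  case empty
  then show ?case by auto
next
  case (insert x F)
  show ?case
  proof (cases "r \<le> mincut E tail head (A \<union> F) u")
    case True
    from insert.IH[OF insert.prems(1) True] insert.prems(3)
    obtain C where "A \<subseteq> C" "C \<subseteq> A \<union> F" "mincut E tail head C u = r" by auto
    then show ?thesis by blast
  next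
    case False
    have "mincut E tail head (insert x (A \<union> F)) u \<le> mincut E tail head (A \<union> F) u + 1"
      using mincut_insert[OF assms(1), where e=x and A="A \<union> F" and tail=tail and head=head and u=u] insert.prems(3) by simp
    then have "mincut E tail head (A \<union> insert x F) u = r" using False insert.prems(2) by simp
    then show ?thesis by blast
  qed
qed

lemma reach_sub: "reach_av E tail head u C \<subseteq> E"
  unfolding reach_av_def is_path_def by (auto intro: nth_mem)

lemma self_cut:
  assumes "B \<subseteq> E"
  shows "edge_cut E tail head B u B"
proof -
  have "set p \<inter> B \<noteq> {}" if "is_path E tail head p" "p ! 0 \<in> B" for p
  proof -
    have "p \<noteq> []" using that(1) by (simp add: is_path_def)
    then have "p ! 0 \<in> set p" by simp
    then show ?thesis using that(2) by blast
  qed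
  then show ?thesis using assms unfolding edge_cut_def by blast
qed

lemma core:
  assumes "finite E"
  shows "\<exists>B. min_edge_cut E tail head A u B \<and> primary_for E tail head B u"
proof -
  define R where "R = reach_av E tail head u"
  define P where "P = min_edge_cut E tail head A u"
  obtain B0 where B0: "edge_cut E tail head A u B0" "card B0 = mincut E tail head A u"
    using mincut_ex[of E tail head A u] by blast
  have "P B0" unfolding P_def min_edge_cut_def using B0 by simp
  from ex_has_least_nat[of P B0 "\<lambda>B. card (R B)", OF \<open>P B0\<close>]
  obtain B where B': "P B" and Bmin': "\<forall>C. P C \<longrightarrow> card (R B) \<le> card (R C)"
    by blast
  have B: "min_edge_cut E tail head A u B" using B' unfolding P_def .
  have Bmin: "card (R B) \<le> card (R C)" if "min_edge_cut E tail head A u C" for C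
    using Bmin' that unfolding P_def by blast
  have Bc: "edge_cut E tail head A u B" "card B = mincut E tail head A u"
    using B by (simp_all add: min_edge_cut_def)
  have BE: "B \<subseteq> E" using Bc(1) by (simp add: edge_cut_def)
  have selfB: "edge_cut E tail head B u B" using self_cut[OF BE] .
  have geq: "card B \<le> card C" if "edge_cut E tail head B u C" for C
  proof -
    have "mincut E tail head A u \<le> card C" using mincut_le[OF cut_trans[OF Bc(1) that]] .
    then show ?thesis using Bc(2) by simp
  qed
  have mB: "mincut E tail head B u = card B"
  proof -
    obtain D where D: "edge_cut E tail head B u D" "card D = mincut E tail head B u"
      using mincut_ex[of E tail head B u] by blast
    have "card B \<le> mincut E tail head B u" using geq[OF D(1)] D(2) by simp
    moreover have "mincut E tail head B u \<le> card B" using mincut_le[OF selfB] .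
    ultimately show ?thesis by simp
  qed
  have "primary_cut E tail head B u B"
    unfolding primary_cut_def
  proof (intro conjI allI impI)
    show "min_edge_cut E tail head B u B" using selfB mB by (simp add: min_edge_cut_def)
    fix C assume C: "min_edge_cut E tail head B u C"
    have Cc: "edge_cut E tail head B u C" "card C = card B"
      using C mB by (simp_all add: min_edge_cut_def)
    have allC: "\<forall>q. is_path E tail head q \<and> q ! 0 \<in> B \<and> head (last q) = u \<longrightarrow> set q \<inter> C \<noteq> {}"
      using Cc(1) by (simp add: edge_cut_def)
    have CA: "min_edge_cut E tail head A u C"
      using cut_trans[OF Bc(1) Cc(1)] Cc Bc by (simp add: min_edge_cut_def)
    have sub: "R C \<subseteq> R B"
    proof
      fix e assume "e \<in> R C"
      then obtain p where p: "is_path E tail head p" "p ! 0 = e" "head (last p) = u" "set p \<inter> C = {}"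
        unfolding R_def reach_av_def by blast
      have "set p \<inter> B = {}"
      proof (rule ccontr)
        assume "set p \<inter> B \<noteq> {}"
        then obtain k where k: "k < length p" "p ! k \<in> B" using hit_idx[of p B] by blast
        have "is_path E tail head (drop k p) \<and> drop k p ! 0 \<in> B \<and> head (last (drop k p)) = u"
          using path_drop[OF p(1) k(1)] drop_facts(1,2)[OF k(1)] k(2) p(3) by simp
        then have "set (drop k p) \<inter> C \<noteq> {}" using allC[rule_format] by blast
        then show False using p(4) drop_facts(3)[OF k(1)] by blast
      qed
      then have "is_path E tail head p \<and> p ! 0 = e \<and> head (last p) = u \<and> set p \<inter> B = {}"
        using p by simp
      then show "e \<in> R B" unfolding R_def reach_av_def mem_Collect_eq by (rule exI)
    qed
    show "edge_cut E tail head C u B"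
    proof (rule ccontr)
      assume nc: "\<not> edge_cut E tail head C u B"
      have "\<not> (\<forall>p. is_path E tail head p \<and> p ! 0 \<in> C \<and> head (last p) = u \<longrightarrow> set p \<inter> B \<noteq> {})"
        using nc BE unfolding edge_cut_def by simp
      then obtain p where p: "is_path E tail head p" "p ! 0 \<in> C" "head (last p) = u" "set p \<inter> B = {}"
        by blast
      have "is_path E tail head p \<and> p ! 0 = p ! 0 \<and> head (last p) = u \<and> set p \<inter> B = {}"
        using p by simp
      then have inB: "p ! 0 \<in> R B" unfolding R_def reach_av_def mem_Collect_eq by (rule exI)
      have ninC: "p ! 0 \<notin> R C"
      proof
        assume "p ! 0 \<in> R C"
        then obtain q where q: "is_path E tail head q" "q ! 0 = p ! 0" "set q \<inter> C = {}"
          unfolding R_def reach_av_def by blast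
        have "q \<noteq> []" using q(1) by (simp add: is_path_def)
        then have "q ! 0 \<in> set q" by simp
        then have "p ! 0 \<in> set q" using q(2) by simp
        then have "p ! 0 \<in> set q \<inter> C" using p(2) by (rule IntI)
        then show False using q(3) by simp
      qed
      have neq: "R C \<noteq> R B"
      proof
        assume "R C = R B"
        then show False using inB ninC by simp
      qed
      have ps: "R C \<subset> R B" using sub neq by (rule psubsetI)
      have "finite (R B)" unfolding R_def using finite_subset[OF reach_sub assms] .
      then have "card (R C) < card (R B)" using ps by (simp add: psubset_card_mono)
      then show False using Bmin[OF CA] by simp
    qed
  qed
  then show ?thesis using B unfolding primary_for_def by blast
qed

theorem lemma9:
  fixes V :: "'v set" and E :: "'e set" and tail head :: "'e \<Rightarrow> 'v"
    and s t :: 'v and T :: "'v set" and xi :: "'e set" and r :: nat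
  assumes "network V E tail head s T"
    and "xi \<subseteq> E"
    and "t \<in> T"
    and "mincut E tail head xi t \<le> r"
    and "r \<le> C_min E tail head s t"
  shows "\<exists>eta. eta \<subseteq> E \<and> card eta = r \<and> primary_for E tail head eta t
           \<and> edge_cut E tail head xi t eta"
proof -
  have fin: "finite E" using assms(1) by (simp add: network_def)
  obtain B where B: "edge_cut E tail head E t B" "card B = mincut E tail head E t"
    using mincut_ex[of E tail head E t] by blast
  have all: "\<forall>q. is_path E tail head q \<and> q ! 0 \<in> E \<and> head (last q) = t \<longrightarrow> set q \<inter> B \<noteq> {}"
    and BE: "B \<subseteq> E"
    using B(1) by (simp_all add: edge_cut_def)
  have "set p \<inter> B \<noteq> {}" if "is_path E tail head p" "head (last p) = t" for p
  proof -
    have "p \<noteq> []" "set p \<subseteq> E" using that(1) by (simp_all add: is_path_def)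
    then have p0: "p ! 0 \<in> set p" by simp
    have e0: "p ! 0 \<in> E" using subsetD[OF \<open>set p \<subseteq> E\<close> p0] .
    have "is_path E tail head p \<and> p ! 0 \<in> E \<and> head (last p) = t"
      using that e0 by (intro conjI)
    then show ?thesis using all by (elim allE impE)
  qed
  then have nc: "node_cut E tail head s t B"
    using BE unfolding node_cut_def by blast
  have "C_min E tail head s t \<le> card B"
    unfolding C_min_def by (rule Least_le) (use nc in blast)
  then have "r \<le> mincut E tail head (xi \<union> E) t" using B assms(2,5)
    by (simp add: Un_absorb1)
  then obtain C where C: "xi \<subseteq> C" "C \<subseteq> xi \<union> E" "mincut E tail head C t = r"
    using ivt[OF fin fin subset_refl assms(4)] by blast
  obtain eta where eta: "min_edge_cut E tail head C t eta" "primary_for E tail head eta t"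
    using core[OF fin, of tail head C t] by blast
  have ec: "edge_cut E tail head C t eta" "card eta = r"
    using eta(1) C(3) by (auto simp: min_edge_cut_def)
  have "edge_cut E tail head xi t eta" using cut_mono[OF C(1) ec(1)] .
  moreover have "eta \<subseteq> E" using ec(1) by (simp add: edge_cut_def)
  ultimately show ?thesis using ec(2) eta(2) by (intro exI[of _ eta]) simp
qed

end
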